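(* Fix one of the six problems minPCA, norm-minPCA, maxRCS, norm-maxRCS, maxRegret, norm-maxRegret, with associated loss $\mathcal{L}\in\{-\mathcal{L}_{\mathrm{var}},-\mathcal{L}_{\mathrm{normVar}},\mathcal{L}_{\mathrm{RCS}},\mathcal{L}_{\mathrm{normRCS}},\mathcal{L}_{\mathrm{reg}},\mathcal{L}_{\mathrm{normReg}}\}$ respectively, and let $\mathcal{Q}=\mathcal{P}$ for the three unnormalized losses and $\mathcal{Q}=\mathcal{P}_{\mathrm{norm}}$ for the three normalized losses. Let $V_k^*\in\arg\min_{V\in\mathcal{O}_{p\times k}}\max_e\mathcal{L}(V;\Sigma_e)$ and $\hat V_k\in\arg\min_{V\in\mathcal{O}_{p\times k}}\max_e\mathcal{L}(V;\hat\Sigma_e)$, and assume the population problem has a solution unique up to right multiplication by a $k\times k$ orthogonal matrix. Let $\hat m_k:=\max_{e\in\mathcal{E}}\mathcal{L}(\hat V_k;\hat\Sigma_e)$ and $n_{\min}=\min_e n_e$. Then as $n_{\min}\to\infty$: (i) $\sup_{P\in\mathcal{Q}}\mathcal{L}(\hat V_k;P)\to\sup_{P\in\mathcal{Q}}\mathcal{L}(V_k^*;P)$ in probability; (ii) for every $\epsilon>0$, $\lim_{n_{\min}\to\infty}\Pr\big(\sup_{P\in\mathcal{Q}}\mathcal{L}(\hat V_k;P)>\hat m_k+\epsilon\big)=0$.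
   Context: $\mathcal{O}_{p\times k}=\{V\in\mathbb{R}^{p\times k}:V^\top V=I_k\}$. Source domains $\mathcal{E}=\{1,\dots,E\}$; for each $e$, $P_e$ is a distribution on $\mathbb{R}^{1\times p}$ with mean zero and finite covariance $\Sigma_e=\mathbb{E}[\mathbf{x}^\top\mathbf{x}]$, $\operatorname{Tr}(\Sigma_e)>0$. $X_e\in\mathbb{R}^{n_e\times p}$ has $n_e$ i.i.d. rows from $P_e$, $\hat\Sigma_e=\frac1{n_e}X_e^\top X_e$, $\operatorname{Tr}(\hat\Sigma_e)>0$. Losses for symmetric PSD $\Sigma$ of positive trace and $V\in\mathcal{O}_{p\times k}$: $\mathcal{L}_{\mathrm{var}}(V;\Sigma)=\operatorname{Tr}(V^\top\Sigma V)$, $\mathcal{L}_{\mathrm{normVar}}=\mathcal{L}_{\mathrm{var}}/\operatorname{Tr}(\Sigma)$, $\mathcal{L}_{\mathrm{RCS}}(V;\Sigma)=\operatorname{Tr}(\Sigma)-\operatorname{Tr}(V^\top\Sigma V)$, $\mathcal{L}_{\mathrm{normRCS}}=\mathcal{L}_{\mathrm{RCS}}/\operatorname{Tr}(\Sigma)$, $\mathcal{L}_{\mathrm{reg}}(V;\Sigma)=\mathcal{L}_{\mathrm{RCS}}(V;\Sigma)-\min_{W\in\mathcal{O}_{p\times k}}\mathcal{L}_{\mathrm{RCS}}(W;\Sigma)$, $\mathcal{L}_{\mathrm{normReg}}(V;\Sigma)=\mathcal{L}_{\mathrm{normRCS}}(V;\Sigma)-\min_W\mathcal{L}_{\mathrm{normRCS}}(W;\Sigma)$;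 for a distribution $P$ with second-moment matrix $\Sigma$, $\mathcal{L}(V;P):=\mathcal{L}(V;\Sigma)$. $\mathcal{P}$ is the set of distributions on $\mathbb{R}^{1\times p}$ with mean zero, finite second moments and $\mathbb{E}_P[\mathbf{x}^\top\mathbf{x}]\in\operatorname{conv}(\{\Sigma_e\}_{e\in\mathcal{E}})$. $\mathcal{P}_{\mathrm{norm}}$ is the set of distributions with mean zero, finite second moments, $\mathbb{E}_P\|\mathbf{x}\|_2^2>0$ and $\mathbb{E}_P[\mathbf{x}^\top\mathbf{x}]/\mathbb{E}_P\|\mathbf{x}\|_2^2\in\operatorname{conv}(\{\Sigma_e/\operatorname{Tr}(\Sigma_e)\}_{e\in\mathcal{E}})$. *)

theory Defs
  imports "HOL-Probability.Probability"
begin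

text \<open>Points of R^{1 x p} are vectors of type real^'p; p x k matrices are real^'k^'p.\<close>

definition orth_frames :: "(real^'k^'p) set" where
  "orth_frames = {V. transpose V ** V = mat 1}"

definition L_var :: "real^'k^'p \<Rightarrow> real^'p^'p \<Rightarrow> real" where
  "L_var V S = trace (transpose V ** S ** V)"

definition L_normVar :: "real^'k^'p \<Rightarrow> real^'p^'p \<Rightarrow> real" where
  "L_normVar V S = L_var V S / trace S"

definition L_RCS :: "real^'k^'p \<Rightarrow> real^'p^'p \<Rightarrow> real" where
  "L_RCS V S = trace S - trace (transpose V ** S ** V)"

definition L_normRCS :: "real^'k^'p \<Rightarrow> real^'p^'p \<Rightarrow> real" where
  "L_normRCS V S = L_RCS V S / trace S"

definition L_reg :: "real^'k^'p \<Rightarrow> real^'p^'p \<Rightarrow> real" where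
  "L_reg V S = L_RCS V S - (INF W\<in>(orth_frames :: (real^'k^'p) set). L_RCS W S)"

definition L_normReg :: "real^'k^'p \<Rightarrow> real^'p^'p \<Rightarrow> real" where
  "L_normReg V S = L_normRCS V S - (INF W\<in>(orth_frames :: (real^'k^'p) set). L_normRCS W S)"

datatype problem = MinPCA | NormMinPCA | MaxRCS | NormMaxRCS | MaxRegret | NormMaxRegret

fun loss :: "problem \<Rightarrow> real^'k^'p \<Rightarrow> real^'p^'p \<Rightarrow> real" where
  "loss MinPCA V S = - L_var V S"
| "loss NormMinPCA V S = - L_normVar V S"
| "loss MaxRCS V S = L_RCS V S"
| "loss NormMaxRCS V S = L_normRCS V S"
| "loss MaxRegret V S = L_reg V S"
| "loss NormMaxRegret V S = L_normReg V S"

fun normalized :: "problem \<Rightarrow> bool" where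
  "normalized MinPCA = False"
| "normalized NormMinPCA = True"
| "normalized MaxRCS = False"
| "normalized NormMaxRCS = True"
| "normalized MaxRegret = False"
| "normalized NormMaxRegret = True"

definition outer :: "real^'p \<Rightarrow> real^'p^'p" where
  "outer x = (\<chi> i j. x$i * x$j)"

definition second_moment :: "(real^'p) measure \<Rightarrow> real^'p^'p" where
  "second_moment P = (\<chi> i j. integral\<^sup>L P (\<lambda>x. x$i * x$j))"

definition centered_L2_dist :: "(real^'p) measure \<Rightarrow> bool" where
  "centered_L2_dist P \<longleftrightarrow> sets P = sets borel \<and> prob_space P \<and>
     integrable P (\<lambda>x. x) \<and> integral\<^sup>L P (\<lambda>x. x) = 0 \<and>
     integrable P (\<lambda>x. (norm x)\<^sup>2)"

definition Pset :: "('e \<Rightarrow> real^'p^'p) \<Rightarrow> (real^'p) measure set" where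
  "Pset Sig = {P. centered_L2_dist P \<and> second_moment P \<in> convex hull (range Sig)}"

definition Pnorm :: "('e \<Rightarrow> real^'p^'p) \<Rightarrow> (real^'p) measure set" where
  "Pnorm Sig = {P. centered_L2_dist P \<and> integral\<^sup>L P (\<lambda>x. (norm x)\<^sup>2) > 0 \<and>
     (1 / integral\<^sup>L P (\<lambda>x. (norm x)\<^sup>2)) *\<^sub>R second_moment P
       \<in> convex hull (range (\<lambda>e. (1 / trace (Sig e)) *\<^sub>R Sig e))}"

definition Qset :: "problem \<Rightarrow> ('e \<Rightarrow> real^'p^'p) \<Rightarrow> (real^'p) measure set" where
  "Qset pr Sig = (if normalized pr then Pnorm Sig else Pset Sig)"

definition worst_risk :: "problem \<Rightarrow> ('e \<Rightarrow> real^'p^'p) \<Rightarrow> real^'k^'p \<Rightarrow> real" where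
  "worst_risk pr Sig V = (SUP P\<in>Qset pr Sig. loss pr V (second_moment P))"

definition worst_domain_loss :: "problem \<Rightarrow> ('e::finite \<Rightarrow> real^'p^'p) \<Rightarrow> real^'k^'p \<Rightarrow> real" where
  "worst_domain_loss pr Sig V = (MAX e. loss pr V (Sig e))"

definition minmax_solutions :: "problem \<Rightarrow> ('e::finite \<Rightarrow> real^'p^'p) \<Rightarrow> (real^'k^'p) set" where
  "minmax_solutions pr Sig = {V :: real^'k^'p. V \<in> orth_frames \<and> (\<forall>W :: real^'k^'p. W \<in> orth_frames \<longrightarrow>
      worst_domain_loss pr Sig V \<le> worst_domain_loss pr Sig W)}"

text \<open>Data for sample sizes n: for each domain e the rows X_e(i), i < n e.
  The sample distribution makes all rows independent with row distribution P e.\<close>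
definition sample_space :: "('e::finite \<Rightarrow> (real^'p) measure) \<Rightarrow> ('e \<Rightarrow> nat) \<Rightarrow>
    ('e \<Rightarrow> nat \<Rightarrow> real^'p) measure" where
  "sample_space P n = PiM UNIV (\<lambda>e. PiM {..<n e} (\<lambda>_. P e))"

definition sample_cov :: "nat \<Rightarrow> (nat \<Rightarrow> real^'p) \<Rightarrow> real^'p^'p" where
  "sample_cov m X = (1 / real m) *\<^sub>R (\<Sum>i<m. outer (X i))"

end

theory Submission
  imports Defs "HOL-Probability.Probability"
begin


lemma indep_coords:
  assumes M: "prob_space M" and I: "finite I" "I \<noteq> {}"
  shows "prob_space.indep_vars (PiM I (\<lambda>_. M)) (\<lambda>_. M) (\<lambda>i x. x i) I"
proof -
  interpret P: prob_space "PiM I (\<lambda>_. M)" by (intro prob_space_PiM M)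
  have d: "distr (PiM I (\<lambda>_. M)) M (\<lambda>x. x i) = M" if "i \<in> I" for i
    using distr_PiM_component[of I "\<lambda>_. M" i] M that by auto
  have "distr (PiM I (\<lambda>_. M)) (PiM I (\<lambda>_. M)) (\<lambda>x. \<lambda>i\<in>I. x i) = distr (PiM I (\<lambda>_. M)) (PiM I (\<lambda>_. M)) (\<lambda>x. x)"
    by (intro distr_cong) (auto simp: space_PiM PiE_def extensional_restrict)
  also have "\<dots> = PiM I (\<lambda>_. M)" by (rule distr_id)
  also have "\<dots> = PiM I (\<lambda>i. distr (PiM I (\<lambda>_. M)) M (\<lambda>x. x i))"
    by (intro PiM_cong) (auto simp: d)
  finally show ?thesis
    by (subst P.indep_vars_iff_distr_eq_PiM'[OF I(2)]) auto
qed

lemma integral_coord: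
  fixes f :: "'a \<Rightarrow> real"
  assumes M: "prob_space M" and i: "i \<in> I" and f: "f \<in> borel_measurable M"
  shows "(\<integral>x. f (x i) \<partial>PiM I (\<lambda>_. M)) = integral\<^sup>L M f"
proof -
  have "(\<integral>x. f (x i) \<partial>PiM I (\<lambda>_. M)) = integral\<^sup>L (distr (PiM I (\<lambda>_. M)) M (\<lambda>x. x i)) f"
    using f i by (intro integral_distr[symmetric]) auto
  also have "distr (PiM I (\<lambda>_. M)) M (\<lambda>x. x i) = M"
    using distr_PiM_component[of I "\<lambda>_. M" i] M i by auto
  finally show ?thesis .
qed

lemma integrable_coord:
  fixes f :: "'a \<Rightarrow> real"
  assumes M: "prob_space M" and i: "i \<in> I" and f: "integrable M f"
  shows "integrable (PiM I (\<lambda>_. M)) (\<lambda>x. f (x i))"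
proof -
  have "distr (PiM I (\<lambda>_. M)) M (\<lambda>x. x i) = M"
    using distr_PiM_component[of I "\<lambda>_. M" i] M i by auto
  then have "integrable (distr (PiM I (\<lambda>_. M)) M (\<lambda>x. x i)) f" using f by simp
  then show ?thesis using i f
    by (subst (asm) integrable_distr_eq) auto
qed

lemma wlln:
  fixes f :: "'a \<Rightarrow> real"
  assumes M: "prob_space M" and f: "integrable M f" and \<eta>: "\<eta> > 0" and \<delta>: "\<delta> > 0"
  shows "\<exists>N. \<forall>m\<ge>N. measure (PiM {..<m} (\<lambda>_. M))
     {x \<in> space (PiM {..<m} (\<lambda>_. M)). \<eta> < \<bar>(\<Sum>i<m. f (x i)) / real m - integral\<^sup>L M f\<bar>} < \<delta>"
proof -
  interpret prob_space M by (rule M)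
  have fm[measurable]: "f \<in> borel_measurable M" using f by auto
  define h where "h c x = max 0 (\<bar>f x\<bar> - c)" for c x
  define g where "g c x = max (-c) (min c (f x))" for c x
  have hm[measurable]: "h c \<in> borel_measurable M" for c unfolding h_def by measurable
  have gm[measurable]: "g c \<in> borel_measurable M" for c unfolding g_def by measurable
  have hint: "integrable M (h c)" if "c \<ge> 0" for c
    by (rule Bochner_Integration.integrable_bound[OF integrable_abs[OF f]]) (use that in \<open>auto simp: h_def\<close>)
  have gint: "integrable M (g c)" if "c \<ge> 0" for c
    by (rule Bochner_Integration.integrable_bound[OF integrable_abs[OF f]]) (use that in \<open>auto simp: g_def\<close>)
  have hf: "\<bar>f x - g c x\<bar> = h c x" if "c \<ge> 0" for c x
    using that by (auto simp: g_def h_def)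
  have conv: "(\<lambda>j. \<integral>x. h (real j) x \<partial>M) \<longlonglongrightarrow> integral\<^sup>L M (\<lambda>x. 0)"
  proof (rule integral_dominated_convergence[where w="\<lambda>x. \<bar>f x\<bar>"])
    show "AE x in M. (\<lambda>j. h (real j) x) \<longlonglongrightarrow> 0"
    proof (intro AE_I2)
      fix x
      have "eventually (\<lambda>j. h (real j) x = 0) sequentially"
        using eventually_ge_at_top[of "nat \<lceil>\<bar>f x\<bar>\<rceil>"]
      proof eventually_elim
        case (elim j)
        have "\<bar>f x\<bar> \<le> real (nat \<lceil>\<bar>f x\<bar>\<rceil>)" by (rule real_nat_ceiling_ge)
        also have "\<dots> \<le> real j" using elim by (rule of_nat_mono)
        finally show ?case by (simp add: h_def)
      qed
      then show "(\<lambda>j. h (real j) x) \<longlonglongrightarrow> 0" by (rule tendsto_eventually)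
    qed
    show "AE x in M. norm (h (real j) x) \<le> \<bar>f x\<bar>" for j by (auto simp: h_def)
  qed (auto intro: f)
  define \<epsilon>0 where "\<epsilon>0 = \<eta> * min \<delta> 1 / 8"
  have \<epsilon>0: "\<epsilon>0 > 0" using \<eta> \<delta> by (simp add: \<epsilon>0_def)
  have "eventually (\<lambda>j. \<bar>(\<integral>x. h (real j) x \<partial>M)\<bar> < \<epsilon>0 \<and> j \<ge> 1) sequentially"
    using conv \<epsilon>0 by (intro eventually_conj) (auto simp: tendsto_iff dist_real_def eventually_ge_at_top)
  then obtain j where j: "\<bar>(\<integral>x. h (real j) x \<partial>M)\<bar> < \<epsilon>0" "j \<ge> 1"
    by (auto simp: eventually_sequentially)
  define c where "c = real j"
  have c: "c \<ge> 1" using j by (simp add: c_def)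
  have hintc: "integrable M (h c)" using c hint by simp
  have hc: "(\<integral>x. h c x \<partial>M) < \<epsilon>0" using j by (simp add: c_def)
  define a where "a = \<eta>\<^sup>2 / (18 * c\<^sup>2)"
  have a: "a > 0" using \<eta> c by (simp add: a_def)
  obtain N0 :: nat where N0: "real N0 > ln (4 / \<delta>) / a" using reals_Archimedean2 by blast
  define N where "N = max N0 1"
  have expN: "2 * exp (- real m * a) < \<delta> / 2" if "m \<ge> N" for m
  proof -
    have "real m > ln (4 / \<delta>) / a" using N0 that by (simp add: N_def)
    then have "real m * a > ln (4 / \<delta>)" using a by (simp add: field_simps)
    then have "exp (- real m * a) < exp (- ln (4 / \<delta>))" by simp
    also have "\<dots> = \<delta> / 4" using \<delta> by (simp add: exp_minus)
    finally show ?thesis by simp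
  qed
  show ?thesis
  proof (intro exI allI impI)
    fix m assume mN: "N \<le> m"
    have m1: "m \<ge> 1" using mN by (simp add: N_def)
    define Mm where "Mm = PiM {..<m} (\<lambda>_. M)"
    interpret Q: prob_space Mm unfolding Mm_def by (intro prob_space_PiM M)
    have ind: "Q.indep_vars (\<lambda>_. borel) (\<lambda>i x. g c (x i)) {..<m}"
    proof -
      have ic: "Q.indep_vars (\<lambda>_. M) (\<lambda>i x. x i) {..<m}"
        unfolding Mm_def using m1 by (intro indep_coords[OF M]) (auto simp: lessThan_empty_iff)
      show ?thesis using Q.indep_vars_compose2[OF ic, of "\<lambda>_. g c" "\<lambda>_. borel"] by auto
    qed
    define \<mu> where "\<mu> = (\<Sum>i<m. Q.expectation (\<lambda>x. g c (x i)))"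
    interpret H: Hoeffding_ineq Mm "{..<m}" "\<lambda>i x. g c (x i)" "\<lambda>_. -c" "\<lambda>_. c" \<mu>
    proof unfold_locales
      show "finite {..<m}" by simp
      show "Q.indep_vars (\<lambda>_. borel) (\<lambda>i x. g c (x i)) {..<m}" by (rule ind)
      show "AE x in Mm. g c (x i) \<in> {- c..c}" for i
        by (intro AE_I2) (use c in \<open>simp add: g_def\<close>)
      show "\<mu> \<equiv> \<Sum>i\<in>{..<m}. Q.expectation (\<lambda>x. g c (x i))" by (simp add: \<mu>_def)
    qed
    have \<mu>: "\<mu> = real m * integral\<^sup>L M (g c)"
      unfolding \<mu>_def Mm_def by (simp add: integral_coord[OF M])
    define E1 where "E1 = {x\<in>space Mm. real m * \<eta> / 3 \<le> \<bar>(\<Sum>i<m. g c (x i)) - \<mu>\<bar>}"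
    define E2 where "E2 = {x\<in>space Mm. real m * \<eta> / 3 \<le> (\<Sum>i<m. h c (x i))}"
    have E1m: "E1 \<in> sets Mm" unfolding E1_def Mm_def by measurable
    have E2m: "E2 \<in> sets Mm" unfolding E2_def Mm_def by measurable
    have "measure Mm E1 \<le> 2 * exp (- 2 * (real m * \<eta> / 3)\<^sup>2 / (\<Sum>i<m. (c - - c)\<^sup>2))"
      unfolding E1_def
      using H.Hoeffding_ineq_abs_ge[of "real m * \<eta> / 3"] \<eta> m1 c by simp
    also have "(- 2 * (real m * \<eta> / 3)\<^sup>2 / (\<Sum>i<m. (c - - c)\<^sup>2)) = - real m * a"
      using m1 c by (simp add: a_def power2_eq_square field_simps)
    finally have P1: "measure Mm E1 < \<delta> / 2" using expN[OF mN] by simp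
    have intS: "integrable Mm (\<lambda>x. \<Sum>i<m. h c (x i))"
      unfolding Mm_def by (rule Bochner_Integration.integrable_sum, rule integrable_coord[OF M _ hintc]) auto
    have "measure Mm E2 \<le> (\<integral>x. (\<Sum>i<m. h c (x i)) \<partial>Mm) / (real m * \<eta> / 3)"
      unfolding E2_def
      by (rule integral_Markov_inequality_measure[OF intS, where A="space Mm"])
         (use \<eta> m1 in \<open>auto simp: h_def intro!: AE_I2 sum_nonneg\<close>)
    also have "(\<integral>x. (\<Sum>i<m. h c (x i)) \<partial>Mm) = real m * integral\<^sup>L M (h c)"
      unfolding Mm_def
      by (subst Bochner_Integration.integral_sum) (auto intro!: integrable_coord[OF M _ hintc] simp: integral_coord[OF M])
    also have "real m * integral\<^sup>L M (h c) / (real m * \<eta> / 3) = 3 * integral\<^sup>L M (h c) / \<eta>"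
      using m1 \<eta> by (simp add: field_simps)
    also have "\<dots> \<le> 3 * \<epsilon>0 / \<eta>" using hc \<eta> by (simp add: divide_right_mono)
    also have "\<dots> \<le> 3 * \<delta> / 8" using \<eta> \<delta> by (simp add: \<epsilon>0_def)
    finally have P2: "measure Mm E2 \<le> 3 * \<delta> / 8" .
    have sub: "{x \<in> space Mm. \<eta> < \<bar>(\<Sum>i<m. f (x i)) / real m - integral\<^sup>L M f\<bar>} \<subseteq> E1 \<union> E2"
    proof (rule subsetI, rule ccontr)
      fix x assume x: "x \<in> {x \<in> space Mm. \<eta> < \<bar>(\<Sum>i<m. f (x i)) / real m - integral\<^sup>L M f\<bar>}"
        and nx: "x \<notin> E1 \<union> E2"
      have 1: "\<bar>(\<Sum>i<m. g c (x i)) - real m * integral\<^sup>L M (g c)\<bar> < real m * \<eta> / 3"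
        using nx x by (auto simp: E1_def \<mu>)
      have 2: "(\<Sum>i<m. h c (x i)) < real m * \<eta> / 3"
        using nx x by (auto simp: E2_def)
      have 3: "\<bar>integral\<^sup>L M f - integral\<^sup>L M (g c)\<bar> \<le> integral\<^sup>L M (h c)"
      proof -
        have "\<bar>integral\<^sup>L M f - integral\<^sup>L M (g c)\<bar> = \<bar>\<integral>x. f x - g c x \<partial>M\<bar>"
          using f gint c by simp
        also have "\<dots> \<le> (\<integral>x. \<bar>f x - g c x\<bar> \<partial>M)" by (rule integral_abs_bound)
        also have "\<dots> = integral\<^sup>L M (h c)" using hf c by simp
        finally show ?thesis .
      qed
      have 4: "\<bar>(\<Sum>i<m. f (x i)) - (\<Sum>i<m. g c (x i))\<bar> \<le> (\<Sum>i<m. h c (x i))"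
      proof -
        have "\<bar>(\<Sum>i<m. f (x i)) - (\<Sum>i<m. g c (x i))\<bar> = \<bar>\<Sum>i<m. f (x i) - g c (x i)\<bar>"
          by (simp add: sum_subtractf)
        also have "\<dots> \<le> (\<Sum>i<m. \<bar>f (x i) - g c (x i)\<bar>)" by (rule sum_abs)
        finally show ?thesis using hf c by simp
      qed
      have 5: "integral\<^sup>L M (h c) < \<eta> / 3"
      proof -
        have "\<eta> * min \<delta> 1 \<le> \<eta> * 1" using \<eta> by (intro mult_left_mono) auto
        then show ?thesis using hc \<eta> unfolding \<epsilon>0_def by linarith
      qed
      have "\<bar>(\<Sum>i<m. f (x i)) - real m * integral\<^sup>L M f\<bar> < real m * \<eta>"
      proof -
        have "\<bar>(\<Sum>i<m. f (x i)) - real m * integral\<^sup>L M f\<bar> \<le>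
           \<bar>(\<Sum>i<m. f (x i)) - (\<Sum>i<m. g c (x i))\<bar> + \<bar>(\<Sum>i<m. g c (x i)) - real m * integral\<^sup>L M (g c)\<bar>
           + real m * \<bar>integral\<^sup>L M f - integral\<^sup>L M (g c)\<bar>"
        proof -
          have eq: "real m * \<bar>integral\<^sup>L M f - integral\<^sup>L M (g c)\<bar> = \<bar>real m * integral\<^sup>L M f - real m * integral\<^sup>L M (g c)\<bar>"
            by (simp add: right_diff_distrib[symmetric] abs_mult)
          show ?thesis unfolding eq by (smt (verit))
        qed
        also have "\<dots> < real m * \<eta> / 3 + real m * \<eta> / 3 + real m * (\<eta> / 3)"
          using 1 2 3 4 5 m1 by (intro add_le_less_mono add_less_le_mono mult_left_mono) auto
        finally show ?thesis by (simp add: algebra_simps)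
      qed
      then have "\<bar>(\<Sum>i<m. f (x i)) / real m - integral\<^sup>L M f\<bar> < \<eta>"
        using m1 by (simp add: abs_less_iff field_simps)
      then show False using x by simp
    qed
    have "measure Mm {x \<in> space Mm. \<eta> < \<bar>(\<Sum>i<m. f (x i)) / real m - integral\<^sup>L M f\<bar>} \<le> measure Mm (E1 \<union> E2)"
      using sub E1m E2m by (intro Q.finite_measure_mono) auto
    also have "\<dots> \<le> measure Mm E1 + measure Mm E2" using E1m E2m by (rule measure_Un_le)
    also have "\<dots> < \<delta>" using P1 P2 \<delta> by linarith
    finally show "measure (PiM {..<m} (\<lambda>_. M))
     {x \<in> space (PiM {..<m} (\<lambda>_. M)). \<eta> < \<bar>(\<Sum>i<m. f (x i)) / real m - integral\<^sup>L M f\<bar>} < \<delta>"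
      unfolding Mm_def .
  qed
qed



lemma sample_cov_entry:
  "sample_cov m X $ a $ b = (\<Sum>i<m. X i $ a * X i $ b) / real m"
  by (simp add: sample_cov_def outer_def sum_component)

lemma sample_event:
  fixes P :: "'e::finite \<Rightarrow> (real^'p) measure"
  assumes Pp: "\<And>e. prob_space (P e)"
    and A: "A \<in> sets (PiM {..<n e} (\<lambda>_. P e))"
  shows "(\<lambda>d. d e) -` A \<inter> space (sample_space P n) \<in> sets (sample_space P n)"
    and "measure (sample_space P n) ((\<lambda>d. d e) -` A \<inter> space (sample_space P n))
         = measure (PiM {..<n e} (\<lambda>_. P e)) A"
proof -
  have meas: "(\<lambda>d. d e) \<in> measurable (sample_space P n) (PiM {..<n e} (\<lambda>_. P e))"
    unfolding sample_space_def by (rule measurable_component_singleton) simp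
  show "(\<lambda>d. d e) -` A \<inter> space (sample_space P n) \<in> sets (sample_space P n)"
    using meas A by (rule measurable_sets)
  have de: "distr (sample_space P n) (PiM {..<n e} (\<lambda>_. P e)) (\<lambda>d. d e) = PiM {..<n e} (\<lambda>_. P e)"
    unfolding sample_space_def
    by (rule distr_PiM_component) (auto intro: prob_space_PiM Pp)
  have "measure (distr (sample_space P n) (PiM {..<n e} (\<lambda>_. P e)) (\<lambda>d. d e)) A
      = measure (sample_space P n) ((\<lambda>d. d e) -` A \<inter> space (sample_space P n))"
    by (rule measure_distr[OF meas A])
  then show "measure (sample_space P n) ((\<lambda>d. d e) -` A \<inter> space (sample_space P n))
         = measure (PiM {..<n e} (\<lambda>_. P e)) A"
    unfolding de by (rule sym)
qed

lemma L2_integrable_prod: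
  fixes P :: "(real^'p) measure"
  assumes "centered_L2_dist P"
  shows "integrable P (\<lambda>x. x $ a * x $ b)"
proof -
  have m: "(\<lambda>x. x $ a * x $ b) \<in> borel_measurable P"
  proof -
    have sP: "sets P = sets borel" using assms unfolding centered_L2_dist_def by simp
    have "(\<lambda>x::real^'p. x $ a * x $ b) \<in> borel_measurable borel" by measurable
    then show ?thesis by (subst measurable_cong_sets[OF sP refl])
  qed
  show ?thesis
  proof (rule Bochner_Integration.integrable_bound)
    show "integrable P (\<lambda>x. (norm x)\<^sup>2)" using assms unfolding centered_L2_dist_def by simp
    show "(\<lambda>x. x $ a * x $ b) \<in> borel_measurable P" by (rule m)
    show "AE x in P. norm (x $ a * x $ b) \<le> norm ((norm x)\<^sup>2)"
    proof (intro AE_I2)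
      fix x :: "real^'p"
      have "norm (x $ a * x $ b) = \<bar>x $ a\<bar> * \<bar>x $ b\<bar>" by (simp add: abs_mult)
      also have "\<dots> \<le> norm x * norm x"
        by (intro mult_mono component_le_norm_cart) auto
      finally show "norm (x $ a * x $ b) \<le> norm ((norm x)\<^sup>2)" by (simp add: power2_eq_square)
    qed
  qed
qed

lemma concentration:
  fixes P :: "'e::finite \<Rightarrow> (real^'p) measure"
  assumes dists: "\<forall>e. centered_L2_dist (P e)" and \<eta>: "\<eta> > 0" and \<delta>: "\<delta> > 0"
  shows "\<exists>N. \<forall>n. (\<forall>e. N \<le> n e) \<longrightarrow> (\<exists>C \<in> sets (sample_space P n).
     {d \<in> space (sample_space P n). \<exists>e a b. \<eta> < \<bar>sample_cov (n e) (d e) $ a $ b - second_moment (P e) $ a $ b\<bar>} \<subseteq> C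
     \<and> measure (sample_space P n) C < \<delta>)"
proof -
  have Pp: "prob_space (P e)" for e using dists by (simp add: centered_L2_dist_def)
  define K where "K = real CARD('e \<times> 'p \<times> 'p)"
  have K: "K > 0" by (simp add: K_def)
  define Ev where "Ev t m = {x \<in> space (PiM {..<m} (\<lambda>_. P (fst t))).
     \<eta> < \<bar>(\<Sum>i<m. x i $ fst (snd t) * x i $ snd (snd t)) / real m - integral\<^sup>L (P (fst t)) (\<lambda>x. x $ fst (snd t) * x $ snd (snd t))\<bar>}"
    for t :: "'e \<times> 'p \<times> 'p" and m
  have "\<forall>t. \<exists>N. \<forall>m\<ge>N. measure (PiM {..<m} (\<lambda>_. P (fst t))) (Ev t m) < \<delta> / K"
  proof
    fix t :: "'e \<times> 'p \<times> 'p"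
    show "\<exists>N. \<forall>m\<ge>N. measure (PiM {..<m} (\<lambda>_. P (fst t))) (Ev t m) < \<delta> / K"
    proof -
      have i: "integrable (P (fst t)) (\<lambda>x. x $ fst (snd t) * x $ snd (snd t))"
        using dists by (intro L2_integrable_prod) simp
      have dk: "\<delta> / K > 0" using \<delta> K by simp
      show ?thesis unfolding Ev_def by (rule wlln[OF Pp i \<eta> dk])
    qed
  qed
  then obtain Nf where Nf0: "\<forall>t. \<forall>m\<ge>Nf t. measure (PiM {..<m} (\<lambda>_. P (fst t))) (Ev t m) < \<delta> / K"
    by (rule choice[THEN exE]) blast
  have Nf: "measure (PiM {..<m} (\<lambda>_. P (fst t))) (Ev t m) < \<delta> / K" if "m \<ge> Nf t" for t m
    using Nf0 that by blast
  have Evm: "Ev t m \<in> sets (PiM {..<m} (\<lambda>_. P (fst t)))" for t m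
  proof -
    have [measurable]: "(\<lambda>x. x $ a * x $ b) \<in> borel_measurable (P e)" for e a b
      using L2_integrable_prod[of "P e" a b] dists by auto
    show ?thesis unfolding Ev_def by measurable
  qed
  define N where "N = Max (range Nf)"
  show ?thesis
  proof (intro exI allI impI)
    fix n :: "'e \<Rightarrow> nat" assume n: "\<forall>e. N \<le> n e"
    define S where "S = sample_space P n"
    define B where "B t = (\<lambda>d. d (fst t)) -` Ev t (n (fst t)) \<inter> space S" for t
    have Bs: "B t \<in> sets S" for t
      unfolding B_def S_def by (rule sample_event(1)[where P=P and n=n and e="fst t" and A="Ev t (n (fst t))", OF Pp Evm])
    have Bm: "measure S (B t) < \<delta> / K" for t
    proof -
      have "Nf t \<le> N" unfolding N_def by (rule Max_ge) auto
      then have le: "Nf t \<le> n (fst t)" using n by (meson order_trans)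
      have "measure S (B t) = measure (PiM {..<n (fst t)} (\<lambda>_. P (fst t))) (Ev t (n (fst t)))"
        unfolding B_def S_def
        by (rule sample_event(2)[where P=P and n=n and e="fst t" and A="Ev t (n (fst t))", OF Pp Evm])
      then show ?thesis using Nf[OF le] by simp
    qed
    have sub: "{d \<in> space S. \<exists>e a b. \<eta> < \<bar>sample_cov (n e) (d e) $ a $ b - second_moment (P e) $ a $ b\<bar>}
       \<subseteq> (\<Union>t. B t)"
    proof
      fix d assume "d \<in> {d \<in> space S. \<exists>e a b. \<eta> < \<bar>sample_cov (n e) (d e) $ a $ b - second_moment (P e) $ a $ b\<bar>}"
      then obtain e a b where d: "d \<in> space S" and lt: "\<eta> < \<bar>sample_cov (n e) (d e) $ a $ b - second_moment (P e) $ a $ b\<bar>"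
        by auto
      have de: "d e \<in> space (PiM {..<n e} (\<lambda>_. P e))"
        using measurable_space[OF measurable_component_singleton[of e UNIV "\<lambda>e. PiM {..<n e} (\<lambda>_. P e)"] d[unfolded S_def sample_space_def]]
        by simp
      have e1: "sample_cov (n e) (d e) $ a $ b = (\<Sum>i<n e. d e i $ a * d e i $ b) / real (n e)"
        by (rule sample_cov_entry)
      have e2: "second_moment (P e) $ a $ b = integral\<^sup>L (P e) (\<lambda>x. x $ a * x $ b)"
        by (simp only: second_moment_def vec_lambda_beta)
      have lt2: "\<eta> < \<bar>(\<Sum>i<n e. d e i $ a * d e i $ b) / real (n e) - integral\<^sup>L (P e) (\<lambda>x. x $ a * x $ b)\<bar>"
        using lt by (simp only: e1 e2)
      have "d e \<in> Ev (e, a, b) (n e)"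
        unfolding Ev_def fst_conv snd_conv mem_Collect_eq using de lt2 by (intro conjI)
      then have "d \<in> B (e, a, b)"
        using d unfolding B_def fst_conv by (intro IntI vimageI2)
      then show "d \<in> (\<Union>t. B t)" by blast
    qed
    have "(\<Union>t. B t) \<in> sets S" using Bs by auto
    moreover have "measure S (\<Union>t. B t) \<le> (\<Sum>t\<in>UNIV. measure S (B t))"
      using measure_UNION_le[of UNIV B S] Bs by simp
    moreover have "(\<Sum>t\<in>UNIV. measure S (B t)) < (\<Sum>t\<in>(UNIV :: ('e \<times> 'p \<times> 'p) set). \<delta> / K)"
      by (rule sum_strict_mono) (simp_all add: Bm)
    moreover have "(\<Sum>t\<in>(UNIV :: ('e \<times> 'p \<times> 'p) set). \<delta> / K) = \<delta>" using K by (simp add: K_def)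
    ultimately show "\<exists>C \<in> sets (sample_space P n).
     {d \<in> space (sample_space P n). \<exists>e a b. \<eta> < \<bar>sample_cov (n e) (d e) $ a $ b - second_moment (P e) $ a $ b\<bar>} \<subseteq> C
     \<and> measure (sample_space P n) C < \<delta>"
      using sub unfolding S_def by (intro bexI[of _ "\<Union>t. B t"]) auto
  qed
qed



definition nrm :: "real^'p^'p \<Rightarrow> real" where
  "nrm A = (\<Sum>b\<in>UNIV. \<Sum>a\<in>UNIV. \<bar>A$a$b\<bar>)"

lemma nrm_nonneg: "nrm A \<ge> 0"
  unfolding nrm_def by (intro sum_nonneg) auto

lemma L_var_expand:
  "L_var V S = (\<Sum>k\<in>UNIV. \<Sum>b\<in>UNIV. \<Sum>a\<in>UNIV. V$a$k * S$a$b * V$b$k)"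
  unfolding L_var_def trace_def matrix_matrix_mult_def transpose_def
  by (simp add: sum_distrib_right)

lemma L_var_diff: "L_var V S - L_var V T = L_var V (S - T)"
  unfolding L_var_expand by (simp add: sum_subtractf[symmetric] algebra_simps)

lemma L_var_add: "L_var V (S + T) = L_var V S + L_var V T"
  unfolding L_var_expand by (simp add: sum.distrib[symmetric] algebra_simps)

lemma L_var_scale: "L_var V (c *\<^sub>R S) = c * L_var V S"
  unfolding L_var_expand by (simp add: sum_distrib_left algebra_simps)

lemma trace_scale: "trace (c *\<^sub>R (S::real^'p^'p)) = c * trace S"
  unfolding trace_def by (simp add: sum_distrib_left)

lemma trace_bound: "\<bar>trace (A::real^'p^'p)\<bar> \<le> nrm A"
proof -
  have "\<bar>trace A\<bar> \<le> (\<Sum>b\<in>UNIV. \<bar>A$b$b\<bar>)" unfolding trace_def by (rule sum_abs)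
  also have "\<dots> \<le> nrm A" unfolding nrm_def
    by (intro sum_mono member_le_sum[where f="\<lambda>a. \<bar>A$a$_\<bar>"]) auto
  finally show ?thesis .
qed

lemma orth_entry:
  assumes "V \<in> orth_frames"
  shows "\<bar>V$a$k\<bar> \<le> 1"
proof -
  have "(transpose V ** V) $ k $ k = 1" using assms by (simp add: orth_frames_def mat_def)
  then have s: "(\<Sum>i\<in>UNIV. V$i$k * V$i$k) = 1"
    by (simp add: matrix_matrix_mult_def transpose_def)
  have "V$a$k * V$a$k \<le> (\<Sum>i\<in>UNIV. V$i$k * V$i$k)"
    by (rule member_le_sum) auto
  then have "(V$a$k)\<^sup>2 \<le> 1" using s by (simp add: power2_eq_square)
  then show ?thesis by (simp add: abs_square_le_1)
qed

lemma L_var_bound: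
  fixes V :: "real^'k^'p"
  assumes "V \<in> orth_frames"
  shows "\<bar>L_var V A\<bar> \<le> real CARD('k) * nrm A"
proof -
  have "\<bar>L_var V A\<bar> \<le> (\<Sum>k\<in>UNIV. \<bar>\<Sum>b\<in>UNIV. \<Sum>a\<in>UNIV. V$a$k * A$a$b * V$b$k\<bar>)"
    unfolding L_var_expand by (rule sum_abs)
  also have "\<dots> \<le> (\<Sum>k\<in>(UNIV::'k set). nrm A)"
  proof (rule sum_mono)
    fix k :: 'k
    have "\<bar>\<Sum>b\<in>UNIV. \<Sum>a\<in>UNIV. V$a$k * A$a$b * V$b$k\<bar> \<le> (\<Sum>b\<in>UNIV. \<bar>\<Sum>a\<in>UNIV. V$a$k * A$a$b * V$b$k\<bar>)"
      by (rule sum_abs)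
    also have "\<dots> \<le> (\<Sum>b\<in>UNIV. \<Sum>a\<in>UNIV. \<bar>V$a$k * A$a$b * V$b$k\<bar>)"
      by (intro sum_mono sum_abs)
    also have "\<dots> \<le> (\<Sum>b\<in>UNIV. \<Sum>a\<in>UNIV. \<bar>A$a$b\<bar>)"
    proof (intro sum_mono)
      fix a b
      have "\<bar>V$a$k * A$a$b * V$b$k\<bar> = \<bar>V$a$k\<bar> * \<bar>A$a$b\<bar> * \<bar>V$b$k\<bar>" by (simp add: abs_mult)
      also have "\<dots> \<le> 1 * \<bar>A$a$b\<bar> * 1"
        using orth_entry[OF assms] by (intro mult_mono) auto
      finally show "\<bar>V$a$k * A$a$b * V$b$k\<bar> \<le> \<bar>A$a$b\<bar>" by simp
    qed
    finally show "\<bar>\<Sum>b\<in>UNIV. \<Sum>a\<in>UNIV. V$a$k * A$a$b * V$b$k\<bar> \<le> nrm A" by (simp add: nrm_def)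
  qed
  also have "\<dots> = real CARD('k) * nrm A" by simp
  finally show ?thesis .
qed

lemma L_RCS_eq: "L_RCS V S = trace S - L_var V S"
  by (simp add: L_RCS_def L_var_def)

lemma INF_close:
  fixes f g :: "'a \<Rightarrow> real"
  assumes A: "A \<noteq> {}" and bf: "bdd_below (f ` A)" and bg: "bdd_below (g ` A)"
    and c: "\<forall>x\<in>A. \<bar>f x - g x\<bar> \<le> c"
  shows "\<bar>(INF x\<in>A. f x) - (INF x\<in>A. g x)\<bar> \<le> c"
proof -
  have 1: "(INF x\<in>A. f x) - c \<le> (INF x\<in>A. g x)"
  proof (rule cINF_greatest[OF A])
    fix x assume x: "x \<in> A"
    have "(INF x\<in>A. f x) \<le> f x" by (rule cINF_lower[OF bf x])
    then show "(INF x\<in>A. f x) - c \<le> g x" using c x by force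
  qed
  have 2: "(INF x\<in>A. g x) - c \<le> (INF x\<in>A. f x)"
  proof (rule cINF_greatest[OF A])
    fix x assume x: "x \<in> A"
    have "(INF x\<in>A. g x) \<le> g x" by (rule cINF_lower[OF bg x])
    then show "(INF x\<in>A. g x) - c \<le> f x" using c x by force
  qed
  show ?thesis using 1 2 by linarith
qed

lemma L_RCS_bound:
  fixes W :: "real^'k^'p"
  assumes "W \<in> orth_frames"
  shows "\<bar>L_RCS W S\<bar> \<le> (real CARD('k) + 1) * nrm S"
  using trace_bound[of S] L_var_bound[OF assms, of S] unfolding L_RCS_eq
  by (simp add: algebra_simps)

lemma L_RCS_bdd: "bdd_below ((\<lambda>W::real^'k^'p. L_RCS W S) ` orth_frames)"
proof (rule bdd_belowI2[where m="- (real CARD('k) + 1) * nrm S"])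
  fix W :: "real^'k^'p" assume "W \<in> orth_frames"
  then show "- (real CARD('k) + 1) * nrm S \<le> L_RCS W S" using L_RCS_bound[of W S] by linarith
qed

lemma L_normRCS_eq: "trace S \<noteq> 0 \<Longrightarrow> L_normRCS V S = 1 - L_normVar V S"
  by (simp add: L_normRCS_def L_normVar_def L_RCS_eq diff_divide_distrib)

lemma L_normRCS_bdd:
  assumes "trace S > 0"
  shows "bdd_below ((\<lambda>W::real^'k^'p. L_normRCS W S) ` orth_frames)"
proof (rule bdd_belowI2[where m="1 - real CARD('k) * nrm S / trace S"])
  fix W :: "real^'k^'p" assume W: "W \<in> orth_frames"
  have "L_var W S / trace S \<le> real CARD('k) * nrm S / trace S"
    using L_var_bound[OF W, of S] assms by (intro divide_right_mono) auto
  then show "1 - real CARD('k) * nrm S / trace S \<le> L_normRCS W S"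
    using assms by (simp add: L_normRCS_eq L_normVar_def)
qed

definition Lc :: "'k itself \<Rightarrow> real^'p^'p \<Rightarrow> real" where
  "Lc _ T = 2 * (real CARD('k) + 1) * (1 + 2 * (trace T + nrm T) / (trace T)\<^sup>2)"

lemma normVar_close:
  fixes W :: "real^'k^'p"
  assumes W: "W \<in> orth_frames" and T: "trace T > 0" and r: "nrm (S - T) \<le> trace T / 2"
  shows "\<bar>L_normVar W S - L_normVar W T\<bar> \<le> 2 * real CARD('k) * (trace T + nrm T) / (trace T)\<^sup>2 * nrm (S - T)"
proof -
  define K where "K = real CARD('k)"
  define x where "x = L_var W S"
  define y where "y = L_var W T"
  define s where "s = trace S"
  define t where "t = trace T"
  define r where "r = nrm (S - T)"
  define nT where "nT = nrm T"
  have t: "t > 0" using T by (simp add: t_def)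
  have r0: "r \<ge> 0" by (simp add: r_def nrm_nonneg)
  have nT0: "nT \<ge> 0" by (simp add: nT_def nrm_nonneg)
  have K0: "K \<ge> 0" by (simp add: K_def)
  have xy: "\<bar>x - y\<bar> \<le> K * r"
    unfolding x_def y_def L_var_diff K_def r_def by (rule L_var_bound[OF W])
  have y: "\<bar>y\<bar> \<le> K * nT" unfolding y_def K_def nT_def by (rule L_var_bound[OF W])
  have st: "\<bar>t - s\<bar> \<le> r"
    using trace_bound[of "S - T"] unfolding s_def t_def r_def trace_sub by linarith
  have s: "s \<ge> t / 2" using st r unfolding r_def t_def by linarith
  have s0: "s > 0" using s t by linarith
  have eq: "x / s - y / t = ((x - y) * t + y * (t - s)) / (s * t)"
    using s0 t by (simp add: field_simps)
  have num: "\<bar>(x - y) * t + y * (t - s)\<bar> \<le> K * r * t + K * nT * r"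
  proof -
    have "\<bar>(x - y) * t + y * (t - s)\<bar> \<le> \<bar>(x - y) * t\<bar> + \<bar>y * (t - s)\<bar>"
      by (rule abs_triangle_ineq)
    also have "\<dots> = \<bar>x - y\<bar> * t + \<bar>y\<bar> * \<bar>t - s\<bar>"
      using t by (simp add: abs_mult)
    also have "\<dots> \<le> K * r * t + K * nT * r"
      using xy y st t r0 nT0 K0 by (intro add_mono mult_mono) auto
    finally show ?thesis .
  qed
  have "\<bar>x / s - y / t\<bar> = \<bar>(x - y) * t + y * (t - s)\<bar> / (s * t)"
    using s0 t by (simp add: eq abs_divide abs_mult)
  also have "\<dots> \<le> (K * r * t + K * nT * r) / (s * t)"
    using s0 t num by (intro divide_right_mono) auto
  also have "\<dots> \<le> (K * r * t + K * nT * r) / (t * t / 2)"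
  proof (rule frac_le)
    show "0 \<le> K * r * t + K * nT * r" using K0 r0 t nT0 by simp
    show "0 < t * t / 2" using t by simp
    show "t * t / 2 \<le> s * t" using s t by (simp add: mult_right_mono)
  qed simp
  also have "\<dots> = 2 * K * (t + nT) / t\<^sup>2 * r"
    using t by (simp add: field_simps power2_eq_square)
  finally show ?thesis
    unfolding x_def y_def s_def t_def K_def nT_def r_def L_normVar_def .
qed

lemma loss_lip:
  fixes V :: "real^'k^'p"
  assumes V: "V \<in> orth_frames" and T: "trace T > 0" and r: "nrm (S - T) \<le> trace T / 2"
  shows "\<bar>loss pr V S - loss pr V T\<bar> \<le> Lc TYPE('k) T * nrm (S - T)"
proof -
  define K where "K = real CARD('k)"
  define t where "t = trace T"
  define r where "r = nrm (S - T)"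
  define c where "c = 2 * K * (trace T + nrm T) / (trace T)\<^sup>2"
  have t: "t > 0" using T by (simp add: t_def)
  have r0: "r \<ge> 0" by (simp add: r_def nrm_nonneg)
  have K0: "K \<ge> 0" by (simp add: K_def)
  have c0: "c \<ge> 0" using T nrm_nonneg[of T] K0 unfolding c_def by simp
  have st: "\<bar>trace S - trace T\<bar> \<le> r"
    using trace_bound[of "S - T"] unfolding r_def trace_sub by linarith
  have S: "trace S > 0" using st r T unfolding r_def by linarith
  have Lc: "2 * (K + 1) + 2 * c \<le> Lc TYPE('k) T"
  proof -
    define q where "q = (trace T + nrm T) / (trace T)\<^sup>2"
    have q0: "q \<ge> 0" using T nrm_nonneg[of T] unfolding q_def by simp
    have e1: "Lc TYPE('k) T = 2 * (K + 1) + 4 * (K + 1) * q"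
      unfolding Lc_def q_def K_def using T by (simp add: field_simps)
    have e2: "c = 2 * K * q" unfolding c_def q_def by simp
    have "4 * K * q \<le> 4 * (K + 1) * q" using q0 by (intro mult_right_mono) auto
    then show ?thesis unfolding e1 e2 by simp
  qed
  have ne: "(orth_frames :: (real^'k^'p) set) \<noteq> {}" using V by auto
  have var: "\<bar>L_var W S - L_var W T\<bar> \<le> K * r" if "W \<in> orth_frames" for W :: "real^'k^'p"
    unfolding L_var_diff K_def r_def by (rule L_var_bound[OF that])
  have rcs: "\<bar>L_RCS W S - L_RCS W T\<bar> \<le> (K + 1) * r" if "W \<in> orth_frames" for W :: "real^'k^'p"
    using var[OF that] st unfolding L_RCS_eq by (simp add: algebra_simps)
  have nv: "\<bar>L_normVar W S - L_normVar W T\<bar> \<le> c * r" if "W \<in> orth_frames" for W :: "real^'k^'p"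
    using normVar_close[OF that T r] unfolding c_def r_def K_def by simp
  have nrcs: "\<bar>L_normRCS W S - L_normRCS W T\<bar> \<le> c * r" if "W \<in> orth_frames" for W :: "real^'k^'p"
    using nv[OF that] S T by (simp add: L_normRCS_eq abs_minus_commute)
  have Lr: "(K + 1) * r \<le> Lc TYPE('k) T * r" "c * r \<le> Lc TYPE('k) T * r" "K * r \<le> Lc TYPE('k) T * r"
    "2 * ((K + 1) * r) \<le> Lc TYPE('k) T * r" "2 * (c * r) \<le> Lc TYPE('k) T * r"
    using r0 c0 K0 Lc by (auto intro!: mult_right_mono simp: mult.assoc[symmetric])
  show ?thesis
  proof (cases pr)
    case MinPCA
    then show ?thesis using var[OF V] Lr unfolding r_def by (simp add: abs_minus_commute) (linarith?)
  next
    case NormMinPCA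
    then show ?thesis using nv[OF V] Lr unfolding r_def by (simp add: abs_minus_commute) (linarith?)
  next
    case MaxRCS
    then show ?thesis using rcs[OF V] Lr unfolding r_def by simp (linarith?)
  next
    case NormMaxRCS
    then show ?thesis using nrcs[OF V] Lr unfolding r_def by simp (linarith?)
  next
    case MaxRegret
    have i: "\<bar>(INF W\<in>orth_frames. L_RCS (W::real^'k^'p) S) - (INF W\<in>orth_frames. L_RCS (W::real^'k^'p) T)\<bar> \<le> (K + 1) * r"
    proof -
      have a: "\<forall>W\<in>(orth_frames :: (real^'k^'p) set). \<bar>L_RCS W S - L_RCS W T\<bar> \<le> (K + 1) * r"
        using rcs by blast
      show ?thesis
        by (rule INF_close[where f="\<lambda>W. L_RCS W S" and g="\<lambda>W. L_RCS W T", OF ne L_RCS_bdd[of S] L_RCS_bdd[of T] a])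
    qed
    have "\<bar>L_reg V S - L_reg V T\<bar> \<le> 2 * ((K + 1) * r)"
      using i rcs[OF V] unfolding L_reg_def by linarith
    then show ?thesis using MaxRegret Lr unfolding r_def by simp
  next
    case NormMaxRegret
    have i: "\<bar>(INF W\<in>orth_frames. L_normRCS (W::real^'k^'p) S) - (INF W\<in>orth_frames. L_normRCS (W::real^'k^'p) T)\<bar> \<le> c * r"
    proof -
      have a: "\<forall>W\<in>(orth_frames :: (real^'k^'p) set). \<bar>L_normRCS W S - L_normRCS W T\<bar> \<le> c * r"
        using nrcs by blast
      show ?thesis
        by (rule INF_close[where f="\<lambda>W. L_normRCS W S" and g="\<lambda>W. L_normRCS W T", OF ne L_normRCS_bdd[OF S] L_normRCS_bdd[OF T] a])
    qed
    have "\<bar>L_normReg V S - L_normReg V T\<bar> \<le> 2 * (c * r)"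
      using i nrcs[OF V] unfolding L_normReg_def by linarith
    then show ?thesis using NormMaxRegret Lr unfolding r_def by simp
  qed
qed



lemma int_norm2_trace:
  fixes P :: "(real^'p) measure"
  assumes "centered_L2_dist P"
  shows "integral\<^sup>L P (\<lambda>x. (norm x)\<^sup>2) = trace (second_moment P)"
proof -
  have n: "(norm x)\<^sup>2 = (\<Sum>i\<in>UNIV. x$i * x$i)" for x :: "real^'p"
    by (simp add: power2_norm_eq_inner inner_vec_def)
  have "integral\<^sup>L P (\<lambda>x. (norm x)\<^sup>2) = integral\<^sup>L P (\<lambda>x. \<Sum>i\<in>UNIV. x$i * x$i)"
    by (simp only: n)
  also have "\<dots> = (\<Sum>i\<in>UNIV. integral\<^sup>L P (\<lambda>x. x$i * x$i))"
    by (rule Bochner_Integration.integral_sum) (rule L2_integrable_prod[OF assms])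
  also have "\<dots> = trace (second_moment P)"
    by (simp add: trace_def second_moment_def)
  finally show ?thesis .
qed

fun unnorm :: "problem \<Rightarrow> problem" where
  "unnorm NormMinPCA = MinPCA"
| "unnorm NormMaxRCS = MaxRCS"
| "unnorm NormMaxRegret = MaxRegret"
| "unnorm p = p"

lemma unnorm_not_normalized: "\<not> normalized (unnorm pr)"
  by (cases pr) auto

lemma normRCS_scale:
  assumes "trace S > 0"
  shows "L_normRCS W S = L_RCS W ((1 / trace S) *\<^sub>R S)"
  using assms by (simp add: L_normRCS_def L_RCS_eq L_var_scale trace_scale field_simps)

lemma loss_scale:
  fixes V :: "real^'k^'p"
  assumes "normalized pr" and "trace S > 0"
  shows "loss pr V S = loss (unnorm pr) V ((1 / trace S) *\<^sub>R S)"
proof (cases pr)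
  case NormMinPCA
  then show ?thesis using assms by (simp add: L_normVar_def L_var_scale)
next
  case NormMaxRCS
  then show ?thesis using assms normRCS_scale[OF assms(2)] by simp
next
  case NormMaxRegret
  have "(INF W\<in>orth_frames. L_normRCS (W::real^'k^'p) S) = (INF W\<in>orth_frames. L_RCS (W::real^'k^'p) ((1 / trace S) *\<^sub>R S))"
    by (rule INF_cong[OF refl], rule normRCS_scale[OF assms(2)])
  then show ?thesis using NormMaxRegret normRCS_scale[OF assms(2)]
    by (simp add: L_normReg_def L_reg_def)
qed (use assms in auto)

lemma L_var_comb: "L_var V ((1 - t) *\<^sub>R x + t *\<^sub>R y) = (1 - t) * L_var V x + t * L_var V y"
  by (simp add: L_var_add L_var_scale)

lemma L_RCS_comb: "L_RCS V ((1 - t) *\<^sub>R x + t *\<^sub>R y) = (1 - t) * L_RCS V x + t * L_RCS V y"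
  unfolding L_RCS_eq L_var_comb trace_add trace_scale by (simp add: algebra_simps)

lemma comb_aux:
  fixes t A B C X Y :: real
  shows "(1 - t) * A + t * B \<le> C \<Longrightarrow> (1 - t) * X + t * Y - C \<le> (1 - t) * (X - A) + t * (Y - B)"
  by (simp add: algebra_simps)

lemma convex_loss:
  fixes V :: "real^'k^'p"
  assumes nn: "\<not> normalized pr" and ne: "(orth_frames :: (real^'k^'p) set) \<noteq> {}"
  shows "convex_on UNIV (\<lambda>S. loss pr V S)"
proof (rule convex_onI)
  fix t :: real and x y :: "real^'p^'p" assume t: "t > 0" "t < 1"
  show "loss pr V ((1 - t) *\<^sub>R x + t *\<^sub>R y) \<le> (1 - t) * loss pr V x + t * loss pr V y"
  proof (cases pr)
    case MinPCA then show ?thesis by (simp add: L_var_comb)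
  next
    case MaxRCS then show ?thesis by (simp add: L_RCS_comb)
  next
    case MaxRegret
    have "(1 - t) * (INF W\<in>orth_frames. L_RCS (W::real^'k^'p) x) + t * (INF W\<in>orth_frames. L_RCS (W::real^'k^'p) y)
        \<le> (INF W\<in>orth_frames. L_RCS (W::real^'k^'p) ((1 - t) *\<^sub>R x + t *\<^sub>R y))"
    proof (rule cINF_greatest[OF ne])
      fix W :: "real^'k^'p" assume W: "W \<in> orth_frames"
      have "(1 - t) * (INF W\<in>orth_frames. L_RCS (W::real^'k^'p) x) + t * (INF W\<in>orth_frames. L_RCS (W::real^'k^'p) y)
         \<le> (1 - t) * L_RCS W x + t * L_RCS W y"
        using t by (intro add_mono mult_left_mono cINF_lower[OF L_RCS_bdd W]) auto
      then show "(1 - t) * (INF W\<in>orth_frames. L_RCS (W::real^'k^'p) x) + t * (INF W\<in>orth_frames. L_RCS (W::real^'k^'p) y)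
         \<le> L_RCS W ((1 - t) *\<^sub>R x + t *\<^sub>R y)" by (simp add: L_RCS_comb)
    qed
    then show ?thesis unfolding MaxRegret loss.simps L_reg_def L_RCS_comb by (rule comb_aux)
  qed (use nn in auto)
qed simp

lemma worst_bound:
  fixes V :: "real^'k^'p" and Sig :: "'e::finite \<Rightarrow> real^'p^'p"
  assumes nn: "\<not> normalized pr" and ne: "(orth_frames :: (real^'k^'p) set) \<noteq> {}"
    and z: "z \<in> convex hull (range Sig)"
  shows "loss pr V z \<le> (MAX e. loss pr V (Sig e))"
proof -
  have c: "convex_on (convex hull (range Sig)) (\<lambda>S. loss pr V S)"
    by (rule convex_on_subset[OF convex_loss[OF nn ne]]) auto
  have "\<forall>x\<in>range Sig. loss pr V x \<le> (MAX e. loss pr V (Sig e))" by auto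
  from convex_on_convex_hull_bound[OF c this] z show ?thesis by blast
qed

lemma P_in_Qset:
  fixes P :: "'e::finite \<Rightarrow> (real^'p) measure"
  assumes dists: "\<forall>e. centered_L2_dist (P e)" and tr_pos: "\<forall>e. trace (second_moment (P e)) > 0"
  shows "P e \<in> Qset pr (\<lambda>e. second_moment (P e))"
proof (cases "normalized pr")
  case True
  have I: "integral\<^sup>L (P e) (\<lambda>x. (norm x)\<^sup>2) = trace (second_moment (P e))"
    using dists by (intro int_norm2_trace) auto
  have "(1 / trace (second_moment (P e))) *\<^sub>R second_moment (P e)
      \<in> convex hull (range (\<lambda>e. (1 / trace (second_moment (P e))) *\<^sub>R second_moment (P e)))"
    by (rule hull_inc) auto
  then show ?thesis using True dists tr_pos I by (simp add: Qset_def Pnorm_def)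
next
  case False
  have "second_moment (P e) \<in> convex hull (range (\<lambda>e. second_moment (P e)))"
    by (rule hull_inc) auto
  then show ?thesis using False dists by (simp add: Qset_def Pset_def)
qed

lemma Qset_bound:
  fixes P :: "'e::finite \<Rightarrow> (real^'p) measure" and V :: "real^'k^'p"
  assumes dists: "\<forall>e. centered_L2_dist (P e)" and tr_pos: "\<forall>e. trace (second_moment (P e)) > 0"
    and ne: "(orth_frames :: (real^'k^'p) set) \<noteq> {}"
    and Q: "Q \<in> Qset pr (\<lambda>e. second_moment (P e))"
  shows "loss pr V (second_moment Q) \<le> worst_domain_loss pr (\<lambda>e. second_moment (P e)) V"
proof (cases "normalized pr")
  case True
  then have Q': "centered_L2_dist Q" "integral\<^sup>L Q (\<lambda>x. (norm x)\<^sup>2) > 0"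
    "(1 / integral\<^sup>L Q (\<lambda>x. (norm x)\<^sup>2)) *\<^sub>R second_moment Q
       \<in> convex hull (range (\<lambda>e. (1 / trace (second_moment (P e))) *\<^sub>R second_moment (P e)))"
    using Q by (auto simp: Qset_def Pnorm_def)
  have I: "integral\<^sup>L Q (\<lambda>x. (norm x)\<^sup>2) = trace (second_moment Q)"
    by (rule int_norm2_trace[OF Q'(1)])
  have trQ: "trace (second_moment Q) > 0" using Q'(2) I by simp
  have "loss pr V (second_moment Q) = loss (unnorm pr) V ((1 / trace (second_moment Q)) *\<^sub>R second_moment Q)"
    by (rule loss_scale[OF True trQ])
  also have "\<dots> \<le> (MAX e. loss (unnorm pr) V ((1 / trace (second_moment (P e))) *\<^sub>R second_moment (P e)))"
    using Q'(3) unfolding I by (intro worst_bound[OF unnorm_not_normalized ne])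
  also have "\<dots> = worst_domain_loss pr (\<lambda>e. second_moment (P e)) V"
    unfolding worst_domain_loss_def
    using loss_scale[OF True, of "second_moment (P _)" V] tr_pos by simp
  finally show ?thesis .
next
  case False
  then have "second_moment Q \<in> convex hull (range (\<lambda>e. second_moment (P e)))"
    using Q by (auto simp: Qset_def Pset_def)
  then show ?thesis unfolding worst_domain_loss_def
    by (intro worst_bound[OF False ne])
qed

lemma worst_risk_eq:
  fixes P :: "'e::finite \<Rightarrow> (real^'p) measure" and V :: "real^'k^'p"
  assumes dists: "\<forall>e. centered_L2_dist (P e)" and tr_pos: "\<forall>e. trace (second_moment (P e)) > 0"
    and V: "V \<in> orth_frames"
  shows "worst_risk pr (\<lambda>e. second_moment (P e)) V = worst_domain_loss pr (\<lambda>e. second_moment (P e)) V"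
proof -
  have ne: "(orth_frames :: (real^'k^'p) set) \<noteq> {}" using V by auto
  define Qs where "Qs = Qset pr (\<lambda>e. second_moment (P e))"
  define w where "w = worst_domain_loss pr (\<lambda>e. second_moment (P e)) V"
  have Pin: "P e \<in> Qs" for e unfolding Qs_def by (rule P_in_Qset[OF dists tr_pos])
  have ub: "loss pr V (second_moment Q) \<le> w" if "Q \<in> Qs" for Q
    unfolding w_def by (rule Qset_bound[OF dists tr_pos ne that[unfolded Qs_def]])
  have Qne: "Qs \<noteq> {}" using Pin by auto
  have le: "(SUP Q\<in>Qs. loss pr V (second_moment Q)) \<le> w"
    by (rule cSUP_least[OF Qne ub])
  have "w \<in> range (\<lambda>e. loss pr V (second_moment (P e)))"
    unfolding w_def worst_domain_loss_def by (rule Max_in) auto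
  then obtain e0 where e0: "w = loss pr V (second_moment (P e0))" by auto
  have bdd: "bdd_above ((\<lambda>Q. loss pr V (second_moment Q)) ` Qs)"
    using ub by (intro bdd_aboveI2) auto
  have ge: "w \<le> (SUP Q\<in>Qs. loss pr V (second_moment Q))"
    unfolding e0 by (rule cSUP_upper[OF Pin bdd])
  show ?thesis using le ge unfolding worst_risk_def Qs_def w_def by simp
qed



lemma Lc_nonneg:
  assumes "trace T > 0"
  shows "Lc TYPE('k) T \<ge> 0"
  using assms nrm_nonneg[of T] unfolding Lc_def by (intro mult_nonneg_nonneg) auto

lemma MAX_close:
  fixes f g :: "'e::finite \<Rightarrow> real"
  assumes "\<forall>e. \<bar>f e - g e\<bar> \<le> c"
  shows "\<bar>(MAX e. f e) - (MAX e. g e)\<bar> \<le> c"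
proof -
  have 1: "(MAX e. f e) \<le> (MAX e. g e) + c"
  proof (subst Max_le_iff, simp, simp, intro ballI)
    fix y assume "y \<in> range f"
    then obtain e where "y = f e" by auto
    moreover have "g e \<le> (MAX e. g e)" by (rule Max_ge) auto
    ultimately show "y \<le> (MAX e. g e) + c" using assms[rule_format, of e] by linarith
  qed
  have 2: "(MAX e. g e) \<le> (MAX e. f e) + c"
  proof (subst Max_le_iff, simp, simp, intro ballI)
    fix y assume "y \<in> range g"
    then obtain e where "y = g e" by auto
    moreover have "f e \<le> (MAX e. f e)" by (rule Max_ge) auto
    ultimately show "y \<le> (MAX e. f e) + c" using assms[rule_format, of e] by linarith
  qed
  show ?thesis using 1 2 by linarith
qed

lemma det_close:
  fixes V :: "real^'k^'p" and S T :: "'e::finite \<Rightarrow> real^'p^'p"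
  assumes V: "V \<in> orth_frames" and T: "\<forall>e. trace (T e) > 0"
    and r: "\<forall>e. nrm (S e - T e) \<le> \<rho>" and rt: "\<forall>e. \<rho> \<le> trace (T e) / 2"
    and rc: "\<forall>e. Lc TYPE('k) (T e) * \<rho> \<le> \<gamma>"
  shows "\<bar>worst_domain_loss pr S V - worst_domain_loss pr T V\<bar> \<le> \<gamma>"
  unfolding worst_domain_loss_def
proof (rule MAX_close, rule allI)
  fix e
  have "nrm (S e - T e) \<le> trace (T e) / 2" using r[rule_format, of e] rt[rule_format, of e] by linarith
  then have "\<bar>loss pr V (S e) - loss pr V (T e)\<bar> \<le> Lc TYPE('k) (T e) * nrm (S e - T e)"
    using T by (intro loss_lip[OF V]) auto
  also have "\<dots> \<le> Lc TYPE('k) (T e) * \<rho>"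
    using r Lc_nonneg[of "T e"] T by (intro mult_left_mono) auto
  also have "\<dots> \<le> \<gamma>" using rc by auto
  finally show "\<bar>loss pr V (S e) - loss pr V (T e)\<bar> \<le> \<gamma>" .
qed

lemma trace_close:
  assumes "nrm (S - T) \<le> \<rho>" "\<rho> \<le> trace T / 2" "trace T > 0"
  shows "trace S > 0"
  using trace_bound[of "S - T"] assms unfolding trace_sub by linarith

lemma good_case:
  fixes pr :: problem
    and P :: "'e::finite \<Rightarrow> (real^'p) measure"
    and Vstar Vh :: "real^'k^'p" and S :: "'e \<Rightarrow> real^'p^'p"
  assumes dists: "\<forall>e. centered_L2_dist (P e)"
    and tr_pos: "\<forall>e. trace (second_moment (P e)) > 0"
    and Vstar_sol: "Vstar \<in> minmax_solutions pr (\<lambda>e. second_moment (P e))"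
    and Vh_sol: "(\<forall>e. trace (S e) > 0) \<longrightarrow> Vh \<in> minmax_solutions pr S"
    and r: "\<forall>e. nrm (S e - second_moment (P e)) \<le> \<rho>"
    and rt: "\<forall>e. \<rho> \<le> trace (second_moment (P e)) / 2"
    and rc: "\<forall>e. Lc TYPE('k) (second_moment (P e)) * \<rho> \<le> \<gamma>"
  shows "\<bar>worst_risk pr (\<lambda>e. second_moment (P e)) Vh - worst_risk pr (\<lambda>e. second_moment (P e)) Vstar\<bar> \<le> 2 * \<gamma>"
    and "worst_risk pr (\<lambda>e. second_moment (P e)) Vh \<le> worst_domain_loss pr S Vh + \<gamma>"
proof -
  define Sig where "Sig = (\<lambda>e. second_moment (P e))"
  have trS: "\<forall>e. trace (S e) > 0"
    using r rt tr_pos by (auto intro: trace_close)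
  then have Vh: "Vh \<in> minmax_solutions pr S" using Vh_sol by blast
  have Vho: "Vh \<in> orth_frames" and Vhmin: "\<And>W::real^'k^'p. W \<in> orth_frames \<Longrightarrow> worst_domain_loss pr S Vh \<le> worst_domain_loss pr S W"
    using Vh unfolding minmax_solutions_def by auto
  have Vso: "Vstar \<in> orth_frames" and Vsmin: "\<And>W::real^'k^'p. W \<in> orth_frames \<Longrightarrow> worst_domain_loss pr Sig Vstar \<le> worst_domain_loss pr Sig W"
    using Vstar_sol unfolding minmax_solutions_def Sig_def by auto
  have close: "\<bar>worst_domain_loss pr S W - worst_domain_loss pr Sig W\<bar> \<le> \<gamma>" if "W \<in> orth_frames" for W :: "real^'k^'p"
    using det_close[OF that, of Sig S \<rho> \<gamma> pr] r rt rc tr_pos unfolding Sig_def by auto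
  have Rh: "worst_risk pr Sig Vh = worst_domain_loss pr Sig Vh"
    unfolding Sig_def by (rule worst_risk_eq[OF dists tr_pos Vho])
  have Rs: "worst_risk pr Sig Vstar = worst_domain_loss pr Sig Vstar"
    unfolding Sig_def by (rule worst_risk_eq[OF dists tr_pos Vso])
  have a: "worst_domain_loss pr Sig Vstar \<le> worst_domain_loss pr Sig Vh" by (rule Vsmin[OF Vho])
  have b: "worst_domain_loss pr S Vh \<le> worst_domain_loss pr S Vstar" by (rule Vhmin[OF Vso])
  show "\<bar>worst_risk pr (\<lambda>e. second_moment (P e)) Vh - worst_risk pr (\<lambda>e. second_moment (P e)) Vstar\<bar> \<le> 2 * \<gamma>"
    using a b close[OF Vho] close[OF Vso] Rh Rs unfolding Sig_def by linarith
  show "worst_risk pr (\<lambda>e. second_moment (P e)) Vh \<le> worst_domain_loss pr S Vh + \<gamma>"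
    using close[OF Vho] Rh unfolding Sig_def by linarith
qed

lemma nrm_entry_bound:
  fixes A :: "real^'p^'p"
  assumes "\<forall>a b. \<bar>A$a$b\<bar> \<le> \<eta>"
  shows "nrm A \<le> real CARD('p)^2 * \<eta>"
proof -
  have "nrm A \<le> (\<Sum>b\<in>(UNIV::'p set). \<Sum>a\<in>(UNIV::'p set). \<eta>)"
    unfolding nrm_def using assms by (intro sum_mono) auto
  also have "\<dots> = real CARD('p)^2 * \<eta>" by (simp add: power2_eq_square)
  finally show ?thesis .
qed

theorem mainTheorem7:
  fixes pr :: problem
    and P :: "'e::finite \<Rightarrow> (real^'p) measure"
    and Vstar :: "real^'k^'p"
    and Vhat :: "('e \<Rightarrow> nat) \<Rightarrow> ('e \<Rightarrow> nat \<Rightarrow> real^'p) \<Rightarrow> real^'k^'p"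
  assumes k_le_p: "CARD('k) \<le> CARD('p)"
    and dists: "\<forall>e. centered_L2_dist (P e)"
    and tr_pos: "\<forall>e. trace (second_moment (P e)) > 0"
    and Vstar_sol: "Vstar \<in> minmax_solutions pr (\<lambda>e. second_moment (P e))"
    and unique: "\<forall>V \<in> minmax_solutions pr (\<lambda>e. second_moment (P e)).
                   \<exists>Q :: real^'k^'k. orthogonal_matrix Q \<and> V = Vstar ** Q"
    and Vhat_meas: "\<forall>n. Vhat n \<in> borel_measurable (sample_space P n)"
    and Vhat_sol: "\<forall>n d. d \<in> space (sample_space P n) \<and> (\<forall>e. trace (sample_cov (n e) (d e)) > 0)
                     \<longrightarrow> Vhat n d \<in> minmax_solutions pr (\<lambda>e. sample_cov (n e) (d e))"
  shows "(\<forall>\<epsilon>>0. \<forall>\<delta>>0. \<exists>N. \<forall>n. (\<forall>e. N \<le> n e) \<longrightarrow>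
            measure (sample_space P n)
              {d \<in> space (sample_space P n).
                 \<bar>worst_risk pr (\<lambda>e. second_moment (P e)) (Vhat n d)
                  - worst_risk pr (\<lambda>e. second_moment (P e)) Vstar\<bar> > \<epsilon>} < \<delta>)
       \<and> (\<forall>\<epsilon>>0. \<forall>\<delta>>0. \<exists>N. \<forall>n. (\<forall>e. N \<le> n e) \<longrightarrow>
            measure (sample_space P n)
              {d \<in> space (sample_space P n).
                 worst_risk pr (\<lambda>e. second_moment (P e)) (Vhat n d)
                 > worst_domain_loss pr (\<lambda>e. sample_cov (n e) (d e)) (Vhat n d) + \<epsilon>} < \<delta>)"
proof -
  define Sig where "Sig = (\<lambda>e. second_moment (P e))"
  define R :: "real^'k^'p \<Rightarrow> real" where "R = worst_risk pr Sig"
  define t0 where "t0 = Min (range (\<lambda>e. trace (Sig e)))"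
  have t0_in: "t0 \<in> range (\<lambda>e. trace (Sig e))" unfolding t0_def by (rule Min_in) auto
  have t0: "t0 > 0" using t0_in tr_pos unfolding Sig_def by auto
  have t0le: "t0 \<le> trace (Sig e)" for e unfolding t0_def by (rule Min_le) auto
  define L where "L = Max (range (\<lambda>e. Lc TYPE('k) (Sig e)))"
  have Lge: "Lc TYPE('k) (Sig e) \<le> L" for e unfolding L_def by (rule Max_ge) auto
  have Lc0: "Lc TYPE('k) (Sig e) \<ge> 0" for e using tr_pos unfolding Sig_def by (intro Lc_nonneg) auto
  have L0: "L \<ge> 0" using Lge[of undefined] Lc0[of undefined] by linarith
  have main: "\<exists>N. \<forall>n. (\<forall>e. N \<le> n e) \<longrightarrow> (\<exists>C\<in>sets (sample_space P n). measure (sample_space P n) C < \<delta> \<and>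
      (\<forall>d\<in>space (sample_space P n). d \<notin> C \<longrightarrow>
         \<bar>R (Vhat n d) - R Vstar\<bar> \<le> \<epsilon> / 2 \<and>
         R (Vhat n d) \<le> worst_domain_loss pr (\<lambda>e. sample_cov (n e) (d e)) (Vhat n d) + \<epsilon> / 4))"
    if \<epsilon>: "\<epsilon> > 0" and \<delta>: "\<delta> > 0" for \<epsilon> \<delta> :: real
  proof -
    define \<rho> where "\<rho> = min (t0 / 2) (\<epsilon> / (4 * (L + 1)))"
    have \<rho>0: "\<rho> > 0" using t0 \<epsilon> L0 unfolding \<rho>_def by simp
    have \<rho>t: "\<rho> \<le> trace (Sig e) / 2" for e using t0le[of e] unfolding \<rho>_def by linarith
    have \<rho>c: "Lc TYPE('k) (Sig e) * \<rho> \<le> \<epsilon> / 4" for e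
    proof -
      have "Lc TYPE('k) (Sig e) * \<rho> \<le> (L + 1) * \<rho>"
        using Lge[of e] \<rho>0 by (intro mult_right_mono) auto
      also have "\<dots> \<le> (L + 1) * (\<epsilon> / (4 * (L + 1)))"
        using L0 unfolding \<rho>_def by (intro mult_left_mono) auto
      also have "\<dots> = \<epsilon> / 4" using L0 by (simp add: field_simps)
      finally show ?thesis .
    qed
    define \<eta> where "\<eta> = \<rho> / real CARD('p)^2"
    have \<eta>0: "\<eta> > 0" using \<rho>0 unfolding \<eta>_def by simp
    have \<eta>\<rho>: "real CARD('p)^2 * \<eta> = \<rho>" unfolding \<eta>_def by simp
    obtain N where N: "\<forall>n. (\<forall>e. N \<le> n e) \<longrightarrow> (\<exists>C \<in> sets (sample_space P n).
     {d \<in> space (sample_space P n). \<exists>e a b. \<eta> < \<bar>sample_cov (n e) (d e) $ a $ b - second_moment (P e) $ a $ b\<bar>} \<subseteq> C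
     \<and> measure (sample_space P n) C < \<delta>)"
      using concentration[OF dists \<eta>0 \<delta>] by blast
    show ?thesis
    proof (intro exI allI impI)
      fix n :: "'e \<Rightarrow> nat" assume n: "\<forall>e. N \<le> n e"
      have ex: "\<exists>C \<in> sets (sample_space P n).
     {d \<in> space (sample_space P n). \<exists>e a b. \<eta> < \<bar>sample_cov (n e) (d e) $ a $ b - second_moment (P e) $ a $ b\<bar>} \<subseteq> C
     \<and> measure (sample_space P n) C < \<delta>"
        by (rule mp[OF spec[OF N, of n] n])
      then obtain C where C: "C \<in> sets (sample_space P n)"
        "{d \<in> space (sample_space P n). \<exists>e a b. \<eta> < \<bar>sample_cov (n e) (d e) $ a $ b - second_moment (P e) $ a $ b\<bar>} \<subseteq> C"
        "measure (sample_space P n) C < \<delta>" by (elim bexE conjE) (rule that)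
      show "\<exists>C\<in>sets (sample_space P n). measure (sample_space P n) C < \<delta> \<and>
      (\<forall>d\<in>space (sample_space P n). d \<notin> C \<longrightarrow>
         \<bar>R (Vhat n d) - R Vstar\<bar> \<le> \<epsilon> / 2 \<and>
         R (Vhat n d) \<le> worst_domain_loss pr (\<lambda>e. sample_cov (n e) (d e)) (Vhat n d) + \<epsilon> / 4)"
      proof (intro bexI[OF _ C(1)] conjI C(3) ballI impI)
        fix d assume d: "d \<in> space (sample_space P n)" and dC: "d \<notin> C"
        define S where "S = (\<lambda>e. sample_cov (n e) (d e))"
        have ent: "\<forall>e a b. \<bar>S e $ a $ b - Sig e $ a $ b\<bar> \<le> \<eta>"
        proof (intro allI)
          fix e a b
          show "\<bar>S e $ a $ b - Sig e $ a $ b\<bar> \<le> \<eta>"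
          proof (rule ccontr)
            assume "\<not> \<bar>S e $ a $ b - Sig e $ a $ b\<bar> \<le> \<eta>"
            then have "\<eta> < \<bar>sample_cov (n e) (d e) $ a $ b - second_moment (P e) $ a $ b\<bar>"
              unfolding S_def Sig_def by linarith
            then have "d \<in> {d \<in> space (sample_space P n). \<exists>e a b. \<eta> < \<bar>sample_cov (n e) (d e) $ a $ b - second_moment (P e) $ a $ b\<bar>}"
              using d by blast
            then show False using C(2) dC by blast
          qed
        qed
        have r: "\<forall>e. nrm (S e - Sig e) \<le> \<rho>"
        proof
          fix e
          have "nrm (S e - Sig e) \<le> real CARD('p)^2 * \<eta>"
            by (rule nrm_entry_bound) (use ent in simp)
          then show "nrm (S e - Sig e) \<le> \<rho>" using \<eta>\<rho> by simp
        qed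
        have Vh_sol: "(\<forall>e. trace (S e) > 0) \<longrightarrow> Vhat n d \<in> minmax_solutions pr S"
          using Vhat_sol[rule_format, of d n] d unfolding S_def by blast
        have r': "\<forall>e. nrm (S e - second_moment (P e)) \<le> \<rho>" using r unfolding Sig_def .
        have t': "\<forall>e. \<rho> \<le> trace (second_moment (P e)) / 2" using \<rho>t unfolding Sig_def by blast
        have c': "\<forall>e. Lc TYPE('k) (second_moment (P e)) * \<rho> \<le> \<epsilon> / 4" using \<rho>c unfolding Sig_def by blast
        note g = good_case[OF dists tr_pos Vstar_sol Vh_sol r' t' c']
        show "\<bar>R (Vhat n d) - R Vstar\<bar> \<le> \<epsilon> / 2"
          using g(1) unfolding R_def Sig_def by linarith
        show "R (Vhat n d) \<le> worst_domain_loss pr (\<lambda>e. sample_cov (n e) (d e)) (Vhat n d) + \<epsilon> / 4"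
          using g(2) unfolding R_def Sig_def S_def by linarith
      qed
    qed
  qed
  have fm: "finite_measure (sample_space P n)" for n
  proof -
    have "prob_space (sample_space P n)" unfolding sample_space_def
      using dists by (intro prob_space_PiM) (auto simp: centered_L2_dist_def)
    then show ?thesis by (simp add: prob_space_def)
  qed
  show ?thesis
  proof (intro conjI allI impI)
    fix \<epsilon> \<delta> :: real assume \<epsilon>: "\<epsilon> > 0" and \<delta>: "\<delta> > 0"
    obtain N where N: "\<forall>n. (\<forall>e. N \<le> n e) \<longrightarrow> (\<exists>C\<in>sets (sample_space P n). measure (sample_space P n) C < \<delta> \<and>
      (\<forall>d\<in>space (sample_space P n). d \<notin> C \<longrightarrow>
         \<bar>R (Vhat n d) - R Vstar\<bar> \<le> \<epsilon> / 2 \<and>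
         R (Vhat n d) \<le> worst_domain_loss pr (\<lambda>e. sample_cov (n e) (d e)) (Vhat n d) + \<epsilon> / 4))"
      using main[OF \<epsilon> \<delta>] by blast
    show "\<exists>N. \<forall>n. (\<forall>e. N \<le> n e) \<longrightarrow>
            measure (sample_space P n)
              {d \<in> space (sample_space P n).
                 \<bar>worst_risk pr (\<lambda>e. second_moment (P e)) (Vhat n d)
                  - worst_risk pr (\<lambda>e. second_moment (P e)) Vstar\<bar> > \<epsilon>} < \<delta>"
    proof (intro exI allI impI)
      fix n :: "'e \<Rightarrow> nat" assume n: "\<forall>e. N \<le> n e"
      from N n obtain C where C: "C \<in> sets (sample_space P n)" "measure (sample_space P n) C < \<delta>"
        "\<forall>d\<in>space (sample_space P n). d \<notin> C \<longrightarrow>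
         \<bar>R (Vhat n d) - R Vstar\<bar> \<le> \<epsilon> / 2 \<and>
         R (Vhat n d) \<le> worst_domain_loss pr (\<lambda>e. sample_cov (n e) (d e)) (Vhat n d) + \<epsilon> / 4"
        by blast
      have sub: "{d \<in> space (sample_space P n).
                 \<bar>worst_risk pr (\<lambda>e. second_moment (P e)) (Vhat n d)
                  - worst_risk pr (\<lambda>e. second_moment (P e)) Vstar\<bar> > \<epsilon>} \<subseteq> C"
      proof
        fix d assume "d \<in> {d \<in> space (sample_space P n).
                 \<bar>worst_risk pr (\<lambda>e. second_moment (P e)) (Vhat n d)
                  - worst_risk pr (\<lambda>e. second_moment (P e)) Vstar\<bar> > \<epsilon>}"
        then have d: "d \<in> space (sample_space P n)" and gt: "\<bar>R (Vhat n d) - R Vstar\<bar> > \<epsilon>"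
          unfolding R_def Sig_def by auto
        show "d \<in> C"
        proof (rule ccontr)
          assume "d \<notin> C"
          then have "\<bar>R (Vhat n d) - R Vstar\<bar> \<le> \<epsilon> / 2" using C(3) d by blast
          then show False using gt \<epsilon> by linarith
        qed
      qed
      show "measure (sample_space P n)
              {d \<in> space (sample_space P n).
                 \<bar>worst_risk pr (\<lambda>e. second_moment (P e)) (Vhat n d)
                  - worst_risk pr (\<lambda>e. second_moment (P e)) Vstar\<bar> > \<epsilon>} < \<delta>"
        using finite_measure.finite_measure_mono[OF fm sub C(1)] C(2) by linarith
    qed
  next
    fix \<epsilon> \<delta> :: real assume \<epsilon>: "\<epsilon> > 0" and \<delta>: "\<delta> > 0"
    obtain N where N: "\<forall>n. (\<forall>e. N \<le> n e) \<longrightarrow> (\<exists>C\<in>sets (sample_space P n). measure (sample_space P n) C < \<delta> \<and>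
      (\<forall>d\<in>space (sample_space P n). d \<notin> C \<longrightarrow>
         \<bar>R (Vhat n d) - R Vstar\<bar> \<le> \<epsilon> / 2 \<and>
         R (Vhat n d) \<le> worst_domain_loss pr (\<lambda>e. sample_cov (n e) (d e)) (Vhat n d) + \<epsilon> / 4))"
      using main[OF \<epsilon> \<delta>] by blast
    show "\<exists>N. \<forall>n. (\<forall>e. N \<le> n e) \<longrightarrow>
            measure (sample_space P n)
              {d \<in> space (sample_space P n).
                 worst_risk pr (\<lambda>e. second_moment (P e)) (Vhat n d)
                 > worst_domain_loss pr (\<lambda>e. sample_cov (n e) (d e)) (Vhat n d) + \<epsilon>} < \<delta>"
    proof (intro exI allI impI)
      fix n :: "'e \<Rightarrow> nat" assume n: "\<forall>e. N \<le> n e"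
      from N n obtain C where C: "C \<in> sets (sample_space P n)" "measure (sample_space P n) C < \<delta>"
        "\<forall>d\<in>space (sample_space P n). d \<notin> C \<longrightarrow>
         \<bar>R (Vhat n d) - R Vstar\<bar> \<le> \<epsilon> / 2 \<and>
         R (Vhat n d) \<le> worst_domain_loss pr (\<lambda>e. sample_cov (n e) (d e)) (Vhat n d) + \<epsilon> / 4"
        by blast
      have sub: "{d \<in> space (sample_space P n).
                 worst_risk pr (\<lambda>e. second_moment (P e)) (Vhat n d)
                 > worst_domain_loss pr (\<lambda>e. sample_cov (n e) (d e)) (Vhat n d) + \<epsilon>} \<subseteq> C"
      proof
        fix d assume "d \<in> {d \<in> space (sample_space P n).
                 worst_risk pr (\<lambda>e. second_moment (P e)) (Vhat n d)
                 > worst_domain_loss pr (\<lambda>e. sample_cov (n e) (d e)) (Vhat n d) + \<epsilon>}"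
        then have d: "d \<in> space (sample_space P n)"
          and gt: "R (Vhat n d) > worst_domain_loss pr (\<lambda>e. sample_cov (n e) (d e)) (Vhat n d) + \<epsilon>"
          unfolding R_def Sig_def by auto
        show "d \<in> C"
        proof (rule ccontr)
          assume "d \<notin> C"
          then have "R (Vhat n d) \<le> worst_domain_loss pr (\<lambda>e. sample_cov (n e) (d e)) (Vhat n d) + \<epsilon> / 4"
            using C(3) d by blast
          then show False using gt \<epsilon> by linarith
        qed
      qed
      show "measure (sample_space P n)
              {d \<in> space (sample_space P n).
                 worst_risk pr (\<lambda>e. second_moment (P e)) (Vhat n d)
                 > worst_domain_loss pr (\<lambda>e. sample_cov (n e) (d e)) (Vhat n d) + \<epsilon>} < \<delta>"
        using finite_measure.finite_measure_mono[OF fm sub C(1)] C(2) by linarith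
    qed
  qed
qed

end
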